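(* Let $n\ge 1$, let $\mathcal{C}$ be a set of conditions, let $\varnothing\notin\mathcal{C}$ denote the null condition, fix $c\in\mathcal{C}$, let $N=2^m$ with $m\ge 1$ an integer, and set $d=1/N$. Let $s:\mathbb{R}^n\times[0,1]\times(\mathcal{C}\cup\{\varnothing\})\times(0,1]\to\mathbb{R}^n$ be any function (the shortcut model), and for a real number $\omega$ define the guided output $$g^{\omega}(x,t,c,\delta)=\omega\, s(x,t,c,\delta)+(1-\omega)\, s(x,t,\varnothing,\delta).$$ Fix a guidance scale $w\in\mathbb{R}$ and points $y_0,y_1,\dots,y_N\in\mathbb{R}^n$, where $y_i$ is associated with time $i/N$. Assume the following ideal self-consistency conditions hold: for every $j\in\{0,1,\dots,m-1\}$ and every index $i\in\{0,\dots,N-1\}$ that is a multiple of $2^{j+1}$, $$s\!\left(y_i,\tfrac{i}{N},c,2^{j+1}d\right)=\tfrac12\Big[g^{w}\!\left(y_i,\tfrac{i}{N},c,2^{j}d\right)+g^{w}\!\left(y_{i+2^j},\tfrac{i+2^j}{N},c,2^{j}d\right)\Big],$$ $$s\!\left(y_i,\tfrac{i}{N},\varnothing,2^{j+1}d\right)=\tfrac12\Big[s\!\left(y_i,\tfrac{i}{N},\varnothing,2^{j}d\right)+s\!\left(y_{i+2^j},\tfrac{i+2^j}{N},\varnothing,2^{j}d\right)\Big].$$ Then the one-step output of size $Nd=1$ satisfies $$s(y_0,0,c,Nd)=\frac1N\sum_{i=0}^{N-1} g^{\,w^{\log_2 N}}\!\left(y_i,\tfrac{i}{N},c,d\right),$$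 i.e. it equals the average of the $N$ smallest-step guided outputs, but with the guidance scale compounded to $w^{\log_2 N}$.
   Context: This formalizes the "accumulated guidance" effect in shortcut models: a network $s(x,t,c,\delta)$ conditioned on a sample $x$, time $t$, condition $c$ (or null condition $\varnothing$) and step size $\delta$, trained with classifier-free guidance of fixed scale $w$ inside a self-consistency target (one step of size $2\delta$ equals the average of two consecutive guided steps of size $\delta$). The "ideal" assumptions above express that the self-consistency loss is exactly zero at the relevant points. In the paper the points are the trajectory $y_0=x_0$ (initial noise), $y_{i+1}=y_i+s(y_i,i/N,c,d)\,d$, but the identity holds for any fixed points satisfying the stated conditions. Note the guided output convention used here is $g^\omega=\omega s(\cdot,c,\cdot)+(1-\omega)s(\cdot,\varnothing,\cdot)$. *)

theory Defs
  imports "HOL-Analysis.Analysis"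
begin

definition guided ::
  "('v::real_vector \<Rightarrow> real \<Rightarrow> 'c \<Rightarrow> real \<Rightarrow> 'v) \<Rightarrow> 'c \<Rightarrow> real \<Rightarrow> 'v \<Rightarrow> real \<Rightarrow> 'c \<Rightarrow> real \<Rightarrow> 'v"
  where "guided s null \<omega> x t c \<delta> = \<omega> *\<^sub>R s x t c \<delta> + (1 - \<omega>) *\<^sub>R s x t null \<delta>"

end

theory Submission
  imports Defs
begin

lemma sum_split_pow:
  fixes f :: "nat \<Rightarrow> 'v::real_vector"
  shows "(\<Sum>l<a+b. f l) = (\<Sum>l<a. f l) + (\<Sum>l<b. f (a+l))"
  by (induction b) (auto simp: algebra_simps)

lemma sum_lin:
  fixes f g :: "nat \<Rightarrow> 'v::real_vector"
  shows "(\<Sum>l\<in>A. a *\<^sub>R f l + b *\<^sub>R g l) = a *\<^sub>R (\<Sum>l\<in>A. f l) + b *\<^sub>R (\<Sum>l\<in>A. g l)"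
  by (simp add: sum.distrib scaleR_sum_right)

lemma comb:
  fixes X Y :: "'v::real_vector"
  shows "(w/c) *\<^sub>R X + (((1-w)/c) *\<^sub>R X + ((w/c) *\<^sub>R Y + ((1-w)/c) *\<^sub>R Y)) = (1/c) *\<^sub>R X + (1/c) *\<^sub>R Y"
proof -
  have "(w/c) *\<^sub>R X + ((1-w)/c) *\<^sub>R X = (1/c) *\<^sub>R X"
    by (simp add: scaleR_add_left[symmetric] add_divide_distrib[symmetric])
  moreover have "(w/c) *\<^sub>R Y + ((1-w)/c) *\<^sub>R Y = (1/c) *\<^sub>R Y"
    by (simp add: scaleR_add_left[symmetric] add_divide_distrib[symmetric])
  ultimately show ?thesis by (metis add.assoc add.left_commute)
qed

lemma key:
  fixes F G :: "nat \<Rightarrow> nat \<Rightarrow> 'v::real_vector" and w :: real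
  assumes hF: "\<forall>j<m. \<forall>i<N. 2^(j+1) dvd i \<longrightarrow> F (j+1) i = (1/2) *\<^sub>R ((w *\<^sub>R F j i + (1-w) *\<^sub>R G j i) + (w *\<^sub>R F j (i+2^j) + (1-w) *\<^sub>R G j (i+2^j)))"
    and hG: "\<forall>j<m. \<forall>i<N. 2^(j+1) dvd i \<longrightarrow> G (j+1) i = (1/2) *\<^sub>R (G j i + G j (i+2^j))"
    and hN: "N = 2^m"
  shows "k \<le> m \<Longrightarrow> i < N \<Longrightarrow> 2^k dvd i \<Longrightarrow>
    F k i = (1/2^k) *\<^sub>R (\<Sum>l<2^k. w^k *\<^sub>R F 0 (i+l) + (1-w^k) *\<^sub>R G 0 (i+l)) \<and>
    G k i = (1/2^k) *\<^sub>R (\<Sum>l<2^k. G 0 (i+l))"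
proof (induction k arbitrary: i)
  case 0
  then show ?case by simp
next
  case (Suc k)
  have d1: "2^k dvd i" using Suc.prems(3) by (metis dvd_mult_right power_Suc)
  have d2: "2^k dvd i + 2^k" using d1 by simp
  have lt: "i + 2^k < N"
  proof -
    obtain a where a: "i = 2^(Suc k) * a" using Suc.prems(3) by blast
    obtain b where b: "N = 2^(Suc k) * b" using Suc.prems(1) hN
      by (metis le_imp_power_dvd dvdE)
    have "a < b" using Suc.prems(2) a b by auto
    hence "a + 1 \<le> b" by simp
    hence "2^(Suc k) * (a+1) \<le> 2^(Suc k) * b" by (rule mult_le_mono2)
    moreover have "(0::nat) < 2^k" by simp
    ultimately show ?thesis using a b by (auto simp: algebra_simps intro: order.strict_trans2[rotated])
  qed
  have km: "k < m" using Suc.prems(1) by simp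
  have F1: "F (Suc k) i = (1/2) *\<^sub>R ((w *\<^sub>R F k i + (1-w) *\<^sub>R G k i) + (w *\<^sub>R F k (i+2^k) + (1-w) *\<^sub>R G k (i+2^k)))"
    using hF km Suc.prems by auto
  have G1: "G (Suc k) i = (1/2) *\<^sub>R (G k i + G k (i+2^k))"
    using hG km Suc.prems by auto
  have e: "(2::nat)^Suc k = 2^k + 2^k" by simp
  have A: "F k i = (1/2^k) *\<^sub>R (\<Sum>l<2^k. w^k *\<^sub>R F 0 (i+l) + (1-w^k) *\<^sub>R G 0 (i+l))"
   and B: "G k i = (1/2^k) *\<^sub>R (\<Sum>l<2^k. G 0 (i+l))"
   and A2: "F k (i+2^k) = (1/2^k) *\<^sub>R (\<Sum>l<2^k. w^k *\<^sub>R F 0 (i+2^k+l) + (1-w^k) *\<^sub>R G 0 (i+2^k+l))"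
   and B2: "G k (i+2^k) = (1/2^k) *\<^sub>R (\<Sum>l<2^k. G 0 (i+2^k+l))"
    using Suc.IH[OF _ Suc.prems(2) d1] Suc.IH[OF _ lt d2] km by auto
  show ?case
    unfolding F1 G1 A B A2 B2 e sum_split_pow sum_lin
    apply (simp add: algebra_simps)
    apply (rule comb)
    done
qed



theorem proposition1:
  fixes C :: "'c set" and null :: 'c and c :: 'c
    and m N :: nat and d w :: real
    and s :: "real ^ 'n \<Rightarrow> real \<Rightarrow> 'c \<Rightarrow> real \<Rightarrow> real ^ 'n"
    and y :: "nat \<Rightarrow> real ^ 'n"
  assumes "null \<notin> C" and "c \<in> C"
    and "m \<ge> 1" and "N = 2 ^ m" and "d = 1 / real N"
    and cond: "\<forall>j<m. \<forall>i<N. 2 ^ (j + 1) dvd i \<longrightarrow>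
        s (y i) (real i / real N) c (2 ^ (j + 1) * d) =
          (1/2) *\<^sub>R (guided s null w (y i) (real i / real N) c (2 ^ j * d)
                     + guided s null w (y (i + 2 ^ j)) (real (i + 2 ^ j) / real N) c (2 ^ j * d))"
    and null_cond: "\<forall>j<m. \<forall>i<N. 2 ^ (j + 1) dvd i \<longrightarrow>
        s (y i) (real i / real N) null (2 ^ (j + 1) * d) =
          (1/2) *\<^sub>R (s (y i) (real i / real N) null (2 ^ j * d)
                     + s (y (i + 2 ^ j)) (real (i + 2 ^ j) / real N) null (2 ^ j * d))"
  shows "s (y 0) 0 c (real N * d) =
    (1 / real N) *\<^sub>R (\<Sum>i<N. guided s null (w ^ nat \<lfloor>log 2 (real N)\<rfloor>) (y i) (real i / real N) c d)"
proof -
  define F where "F k i = s (y i) (real i / real N) c (2^k * d)" for k i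
  define G where "G k i = s (y i) (real i / real N) null (2^k * d)" for k i
  have hF: "\<forall>j<m. \<forall>i<N. 2^(j+1) dvd i \<longrightarrow> F (j+1) i = (1/2) *\<^sub>R ((w *\<^sub>R F j i + (1-w) *\<^sub>R G j i) + (w *\<^sub>R F j (i+2^j) + (1-w) *\<^sub>R G j (i+2^j)))"
    using cond unfolding F_def G_def guided_def by simp
  have hG: "\<forall>j<m. \<forall>i<N. 2^(j+1) dvd i \<longrightarrow> G (j+1) i = (1/2) *\<^sub>R (G j i + G j (i+2^j))"
    using null_cond unfolding G_def by simp
  have N0: "0 < N" using assms(4) by simp
  have K: "F m 0 = (1/2^m) *\<^sub>R (\<Sum>l<2^m. w^m *\<^sub>R F 0 (0+l) + (1-w^m) *\<^sub>R G 0 (0+l))"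
    using key[OF hF hG assms(4), of m 0] N0 by simp
  have rN: "real N = 2^m" using assms(4) by simp
  have lg: "nat \<lfloor>log 2 (real N)\<rfloor> = m" using rN by simp
  have "s (y 0) 0 c (real N * d) = F m 0" unfolding F_def using rN by simp
  also have "\<dots> = (1 / real N) *\<^sub>R (\<Sum>i<N. guided s null (w ^ m) (y i) (real i / real N) c d)"
    unfolding K unfolding F_def G_def guided_def using rN assms(4) by simp
  finally show ?thesis unfolding lg .
qed

end
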